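(* Let $n=m$ and $\rho=|\Psi\rangle\langle\Psi|$ with $|\Psi\rangle=\frac{1}{\sqrt m}\sum_{i=1}^m|i\rangle|i\rangle$ a maximally entangled state of $\mathbb{C}^m\otimes\mathbb{C}^m$. Then $D_P(\rho)=D_G(\rho)=\frac{m-1}{m}$.
   Context: Generators $\hat\lambda_i$ ($i=1,\dots,m^2-1$) of $SU(m)$ are Hermitian, traceless, with $\mathrm{Tr}(\hat\lambda_i\hat\lambda_j)=2\delta_{ij}$. For a state $\rho$ on $\mathbb{C}^m\otimes\mathbb{C}^n$, $x_i=\frac{m}{2}\mathrm{Tr}[(\hat\lambda_i^A\otimes\mathbb{I})\rho]$, $t_{ij}=\frac{mn}{4}\mathrm{Tr}[(\hat\lambda_i^A\otimes\hat\lambda_j^B)\rho]$, $T=(t_{ij})$, $\mathcal{T}=\sqrt{\frac{2}{m^2n}}\begin{pmatrix}\vec{x} & \sqrt{\frac{2}{n}}T\end{pmatrix}$; $D_P(\rho)=\min_P\|\mathcal{T}-P\mathcal{T}\|^2$ over rank-$(m-1)$ orthogonal projections $P$ on $\mathbb{R}^{m^2-1}$ (Frobenius norm). The geometric discord is $D_G(\rho)=\min_\chi\mathrm{Tr}(\rho-\chi)^2$ over zero-discord states $\chi=\sum_{k=1}^m p_k|k\rangle\langle k|\otimes\rho_k^B$ ($\{|k\rangle\}$ an orthonormal basis of the first factor, $p_k$ probabilities, $\rho_k^B$ states). *)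

theory Defs
  imports "HOL-Analysis.Analysis"
begin

text \<open>Finite-dimensional complex matrices are represented as complex^'n^'n, where
the finite type 'n indexes a fixed orthonormal (computational) basis; its size is CARD('n).
A bipartite system C^m (x) C^n is indexed by the product type 'a \<times> 'b.\<close>

definition mtrace :: "complex^'n^'n \<Rightarrow> complex" where
  "mtrace A = (\<Sum>i\<in>UNIV. A $ i $ i)"

definition adjoint :: "complex^'n^'m \<Rightarrow> complex^'m^'n" where
  "adjoint A = (\<chi> i j. cnj (A $ j $ i))"

definition hermitian :: "complex^'n^'n \<Rightarrow> bool" where
  "hermitian A \<longleftrightarrow> adjoint A = A"

definition cinner :: "complex^'n \<Rightarrow> complex^'n \<Rightarrow> complex" where
  "cinner x y = (\<Sum>i\<in>UNIV. cnj (x $ i) * y $ i)"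

definition psd :: "complex^'n^'n \<Rightarrow> bool" where
  "psd A \<longleftrightarrow> hermitian A \<and> (\<forall>v. Im (cinner v (A *v v)) = 0 \<and> 0 \<le> Re (cinner v (A *v v)))"

definition is_state :: "complex^'n^'n \<Rightarrow> bool" where
  "is_state \<rho> \<longleftrightarrow> psd \<rho> \<and> mtrace \<rho> = 1"

definition kron :: "complex^'a^'a \<Rightarrow> complex^'b^'b \<Rightarrow> complex^('a \<times> 'b)^('a \<times> 'b)" where
  "kron A B = (\<chi> p q. A $ fst p $ fst q * B $ snd p $ snd q)"

definition outer :: "complex^'n \<Rightarrow> complex^'n \<Rightarrow> complex^'n^'n" where
  "outer u v = (\<chi> i j. u $ i * cnj (v $ j))"

definition orthonormal_basis_fam :: "('n \<Rightarrow> complex^'n) \<Rightarrow> bool" where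
  "orthonormal_basis_fam u \<longleftrightarrow> (\<forall>k l. cinner (u k) (u l) = (if k = l then 1 else 0))"

definition su_generators :: "('g::finite \<Rightarrow> complex^'n^'n) \<Rightarrow> bool" where
  "su_generators l \<longleftrightarrow> CARD('g) = CARD('n)^2 - 1
     \<and> (\<forall>i. hermitian (l i) \<and> mtrace (l i) = 0)
     \<and> (\<forall>i j. mtrace (l i ** l j) = (if i = j then 2 else 0))"

text \<open>x_i = (m/2) Tr[(l^A_i (x) I) rho]  (a real number for Hermitian rho).\<close>
definition xvec :: "('ga \<Rightarrow> complex^'a::finite^'a) \<Rightarrow> complex^('a \<times> 'b::finite)^('a \<times> 'b) \<Rightarrow> 'ga \<Rightarrow> real" where
  "xvec la \<rho> i = Re (of_nat CARD('a) / 2 * mtrace (kron (la i) (mat 1 :: complex^'b^'b) ** \<rho>))"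

definition tcoef :: "('ga \<Rightarrow> complex^'a::finite^'a) \<Rightarrow> ('gb \<Rightarrow> complex^'b::finite^'b)
     \<Rightarrow> complex^('a \<times> 'b)^('a \<times> 'b) \<Rightarrow> 'ga \<Rightarrow> 'gb \<Rightarrow> real" where
  "tcoef la lb \<rho> i j = Re (of_nat CARD('a) * of_nat CARD('b) / 4 * mtrace (kron (la i) (lb j) ** \<rho>))"

text \<open>The (m^2-1) x (n^2) matrix  calT = sqrt(2/(m^2 n)) ( x | sqrt(2/n) T );
the column index Inl () is the column x, the columns Inr j are those of T.\<close>
definition calT :: "('ga::finite \<Rightarrow> complex^'a::finite^'a) \<Rightarrow> ('gb::finite \<Rightarrow> complex^'b::finite^'b)
     \<Rightarrow> complex^('a \<times> 'b)^('a \<times> 'b) \<Rightarrow> real^(unit + 'gb)^'ga" where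
  "calT la lb \<rho> = (\<chi> i c. sqrt (2 / (real CARD('a)^2 * real CARD('b))) *
      (case c of Inl _ \<Rightarrow> xvec la \<rho> i
               | Inr j \<Rightarrow> sqrt (2 / real CARD('b)) * tcoef la lb \<rho> i j))"

definition orth_proj :: "real^'g^'g \<Rightarrow> bool" where
  "orth_proj P \<longleftrightarrow> transpose P = P \<and> P ** P = P"

text \<open>D_P(rho) = min over rank-(m-1) orthogonal projections P of ||calT - P calT||^2;
the norm on real^'c^'g is the Frobenius (Hilbert-Schmidt) norm.\<close>
definition D_P :: "('ga::finite \<Rightarrow> complex^'a::finite^'a) \<Rightarrow> ('gb::finite \<Rightarrow> complex^'b::finite^'b)
     \<Rightarrow> complex^('a \<times> 'b)^('a \<times> 'b) \<Rightarrow> real" where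
  "D_P la lb \<rho> = Inf {(norm (calT la lb \<rho> - P ** calT la lb \<rho>))^2 | P.
       orth_proj P \<and> rank P = CARD('a) - 1}"

definition zero_discord :: "complex^('a::finite \<times> 'b::finite)^('a \<times> 'b) \<Rightarrow> bool" where
  "zero_discord \<chi>' \<longleftrightarrow> (\<exists>(u :: 'a \<Rightarrow> complex^'a) (p :: 'a \<Rightarrow> real) (\<sigma> :: 'a \<Rightarrow> complex^'b^'b).
      orthonormal_basis_fam u \<and> (\<forall>k. 0 \<le> p k) \<and> (\<Sum>k\<in>UNIV. p k) = 1 \<and> (\<forall>k. is_state (\<sigma> k))
      \<and> \<chi>' = (\<Sum>k\<in>UNIV. p k *\<^sub>R kron (outer (u k) (u k)) (\<sigma> k)))"

definition D_G :: "complex^('a::finite \<times> 'b::finite)^('a \<times> 'b) \<Rightarrow> real" where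
  "D_G \<rho> = Inf {Re (mtrace ((\<rho> - \<chi>') ** (\<rho> - \<chi>'))) | \<chi>'. zero_discord \<chi>'}"

definition max_ent_vec :: "complex^('a::finite \<times> 'a)" where
  "max_ent_vec = (\<chi> p. if fst p = snd p then complex_of_real (1 / sqrt (real CARD('a))) else 0)"

definition max_ent_state :: "complex^('a::finite \<times> 'a)^('a \<times> 'a)" where
  "max_ent_state = outer max_ent_vec max_ent_vec"

end

theory Submission
  imports Defs
begin


lemma mtrace_add: "mtrace (A + B) = mtrace A + mtrace B"
  by (simp add: mtrace_def sum.distrib)
lemma mtrace_diff: "mtrace (A - B) = mtrace A - mtrace B"
  by (simp add: mtrace_def sum_subtractf)
lemma mtrace_scaleR: "mtrace (c *\<^sub>R A) = of_real c * mtrace A"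
  unfolding mtrace_def by (simp add: sum_distrib_left) (simp add: scaleR_conv_of_real)
lemma mtrace_sum: "mtrace (sum f S) = (\<Sum>r\<in>S. mtrace (f r))"
  by (induction S rule: infinite_finite_induct) (auto simp: mtrace_add mtrace_def sum.distrib)
lemma matrix_add_rdistrib': "((B + C) ** A) = (B ** A) + (C ** A)"
  by (simp add: matrix_matrix_mult_def vec_eq_iff ring_distribs sum.distrib)
lemma matrix_diff_rdistrib': "((B - C) ** (A::'x::comm_ring_1^'n^'n)) = (B ** A) - (C ** A)"
  by (simp add: matrix_matrix_mult_def vec_eq_iff ring_distribs sum_subtractf)
lemma matrix_diff_ldistrib': "(A ** (B - C)) = (A ** B) - (A ** (C::'x::comm_ring_1^'n^'n))"
  by (simp add: matrix_matrix_mult_def vec_eq_iff ring_distribs sum_subtractf)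

lemma mtrace_commute: "mtrace (A ** B) = mtrace (B ** A)"
  unfolding mtrace_def matrix_matrix_mult_def
  by (simp, subst sum.swap, simp add: mult.commute)

lemma matrix_mul_sum_left: "(sum f S) ** (B::'x::comm_ring_1^'n^'n) = (\<Sum>r\<in>S. f r ** B)"
  by (induction S rule: infinite_finite_induct) (auto simp: matrix_add_rdistrib')
lemma matrix_mul_sum_right: "(B::'x::comm_ring_1^'n^'n) ** (sum f S) = (\<Sum>r\<in>S. B ** f r)"
  by (induction S rule: infinite_finite_induct) (auto simp: matrix_add_ldistrib)

lemma scaleR_mm_left: "(c *\<^sub>R A) ** (B::complex^'n^'n) = c *\<^sub>R (A ** B)"
  by (simp add: matrix_matrix_mult_def vec_eq_iff scaleR_sum_right)
lemma scaleR_mm_right: "A ** (c *\<^sub>R (B::complex^'n^'n)) = c *\<^sub>R (A ** B)"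
  by (simp add: matrix_matrix_mult_def vec_eq_iff scaleR_sum_right)

lemma sum_UNIV_prod: "(\<Sum>p\<in>(UNIV::('a::finite\<times>'b::finite) set). f p) = (\<Sum>a\<in>UNIV. \<Sum>b\<in>UNIV. f (a,b))"
  using sum.cartesian_product[of "\<lambda>a b. f (a,b)" UNIV UNIV] by (simp add: UNIV_Times_UNIV)

lemma kron_mul: "kron A B ** kron C D = kron (A ** C) (B ** D)"
  unfolding kron_def matrix_matrix_mult_def
  by (simp add: vec_eq_iff sum_UNIV_prod sum_product mult_ac)

lemma mtrace_kron: "mtrace (kron A B) = mtrace A * mtrace B"
  unfolding kron_def mtrace_def by (simp add: sum_UNIV_prod sum_product)

lemma mtrace_outer_mul: "mtrace (outer a b ** outer c d) = cinner d a * cinner b c"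
  unfolding outer_def mtrace_def matrix_matrix_mult_def cinner_def
  by (simp add: sum_product mult_ac)

lemma ment_entry: "(max_ent_state :: complex^('a::finite\<times>'a)^('a\<times>'a)) $ p $ q
   = (if fst p = snd p \<and> fst q = snd q then 1 / of_nat CARD('a) else 0)"
  unfolding max_ent_state_def outer_def max_ent_vec_def
  by (auto simp: of_real_mult[symmetric] simp del: of_real_mult)

lemma sum_diag: "(\<Sum>p\<in>(UNIV::('a::finite\<times>'a) set). if fst p = snd p then f p else 0) = (\<Sum>a\<in>UNIV. f (a,a))"
  by (simp add: sum_UNIV_prod if_distrib cong: if_cong)


lemma mtrace_mul_rho: "mtrace (X ** (max_ent_state :: complex^('a::finite\<times>'a)^('a\<times>'a)))
   = (\<Sum>a\<in>UNIV. \<Sum>b\<in>UNIV. X $ (a,a) $ (b,b)) / of_nat CARD('a)"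
proof -
  have "mtrace (X ** (max_ent_state :: complex^('a::finite\<times>'a)^('a\<times>'a)))
    = (\<Sum>p\<in>UNIV. if fst p = snd p then (\<Sum>q\<in>UNIV. if fst q = snd q then X $ p $ q / of_nat CARD('a) else 0) else 0)"
    unfolding mtrace_def matrix_matrix_mult_def by (auto simp: ment_entry intro!: sum.cong)
  also have "\<dots> = (\<Sum>a\<in>UNIV. \<Sum>b\<in>UNIV. X $ (a,a) $ (b,b) / of_nat CARD('a))"
    by (simp only: sum_diag)
  finally show ?thesis by (simp add: sum_divide_distrib)
qed


lemma hermitian_entry: "hermitian A \<Longrightarrow> A $ i $ j = cnj (A $ j $ i)"
  unfolding hermitian_def adjoint_def by (metis vec_lambda_beta)

lemma mtrace_rho_rho: "mtrace ((max_ent_state :: complex^('a::finite\<times>'a)^('a\<times>'a)) ** max_ent_state) = 1"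
proof -
  have "of_nat CARD('a) \<noteq> (0::complex)" by simp
  then show ?thesis
    by (simp add: mtrace_mul_rho ment_entry power2_eq_square)
qed

lemma mtrace_kron_rho: "mtrace (kron (outer u u) \<sigma> ** (max_ent_state :: complex^('a::finite\<times>'a)^('a\<times>'a)))
   = (\<Sum>a\<in>UNIV. \<Sum>b\<in>UNIV. u $ a * cnj (u $ b) * \<sigma> $ a $ b) / of_nat CARD('a)"
  by (simp add: mtrace_mul_rho kron_def outer_def)

definition chi_of :: "('a::finite \<Rightarrow> real) \<Rightarrow> ('a \<Rightarrow> complex^'a) \<Rightarrow> ('a \<Rightarrow> complex^'b::finite^'b) \<Rightarrow> complex^('a\<times>'b)^('a\<times>'b)" where
  "chi_of p u \<sigma> = (\<Sum>k\<in>UNIV. p k *\<^sub>R kron (outer (u k) (u k)) (\<sigma> k))"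

lemma mtrace_chi_chi:
  assumes "orthonormal_basis_fam u"
  shows "mtrace (chi_of p u \<sigma> ** chi_of p u \<sigma>) = (\<Sum>r\<in>UNIV. of_real ((p r)^2) * mtrace (\<sigma> r ** \<sigma> r))"
proof -
  have "mtrace (chi_of p u \<sigma> ** chi_of p u \<sigma>)
     = (\<Sum>r\<in>UNIV. \<Sum>s\<in>UNIV. of_real (p r) * (of_real (p s) * (cinner (u r) (u s) * (cinner (u s) (u r) * mtrace (\<sigma> s ** \<sigma> r)))))"
    unfolding chi_of_def
    by (simp add: matrix_mul_sum_left matrix_mul_sum_right scaleR_mm_left scaleR_mm_right mtrace_sum
        mtrace_scaleR kron_mul mtrace_kron mtrace_outer_mul mult.assoc sum_distrib_left)
  also have "\<dots> = (\<Sum>r\<in>UNIV. \<Sum>s\<in>UNIV. if r = s then of_real ((p r)^2) * mtrace (\<sigma> r ** \<sigma> r) else 0)"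
    using assms unfolding orthonormal_basis_fam_def
    by (intro sum.cong refl) (auto simp: power2_eq_square)
  finally show ?thesis by simp
qed

lemma mtrace_chi_rho:
  "mtrace (chi_of p u \<sigma> ** (max_ent_state :: complex^('a::finite\<times>'a)^('a\<times>'a)))
   = (\<Sum>r\<in>UNIV. of_real (p r) * (\<Sum>a\<in>UNIV. \<Sum>b\<in>UNIV. u r $ a * cnj (u r $ b) * \<sigma> r $ a $ b)) / of_nat CARD('a)"
  unfolding chi_of_def
  by (simp add: matrix_mul_sum_left scaleR_mm_left mtrace_sum mtrace_scaleR mtrace_kron_rho flip: sum_divide_distrib)

definition aval :: "complex^'a \<Rightarrow> complex^'a^'a \<Rightarrow> real" where
  "aval v s = Re (\<Sum>a\<in>UNIV. \<Sum>b\<in>UNIV. v $ a * cnj (v $ b) * s $ a $ b)"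

lemma dist_formula:
  assumes "orthonormal_basis_fam u"
  shows "Re (mtrace (((max_ent_state :: complex^('a::finite\<times>'a)^('a\<times>'a)) - chi_of p u \<sigma>) ** (max_ent_state - chi_of p u \<sigma>)))
     = 1 - 2 / real CARD('a) * (\<Sum>r\<in>UNIV. p r * aval (u r) (\<sigma> r)) + (\<Sum>r\<in>UNIV. (p r)^2 * Re (mtrace (\<sigma> r ** \<sigma> r)))"
proof -
  let ?R = "max_ent_state :: complex^('a::finite\<times>'a)^('a\<times>'a)"
  let ?C = "chi_of p u \<sigma>"
  have e: "mtrace ((?R - ?C) ** (?R - ?C)) = mtrace (?R ** ?R) - 2 * mtrace (?C ** ?R) + mtrace (?C ** ?C)"
    by (simp add: matrix_diff_rdistrib' matrix_diff_ldistrib' mtrace_diff mtrace_commute[of ?R ?C])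
  have "Re (mtrace (?C ** ?R)) = (\<Sum>r\<in>UNIV. p r * aval (u r) (\<sigma> r)) / real CARD('a)"
    unfolding mtrace_chi_rho aval_def Re_divide_of_nat Re_sum by simp
  moreover have "Re (mtrace (?C ** ?C)) = (\<Sum>r\<in>UNIV. (p r)^2 * Re (mtrace (\<sigma> r ** \<sigma> r)))"
    unfolding mtrace_chi_chi[OF assms] by simp
  ultimately show ?thesis using e by (simp add: mtrace_rho_rho)
qed


lemma zcnj: "z * cnj z = (of_real (cmod z))^2"
  by (metis complex_norm_square of_real_power)

lemma tr_sq: "hermitian \<sigma> \<Longrightarrow> Re (mtrace (\<sigma> ** \<sigma>)) = (\<Sum>a\<in>UNIV. \<Sum>b\<in>UNIV. (cmod (\<sigma> $ a $ b))^2)"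
proof -
  assume h: "hermitian \<sigma>"
  have "mtrace (\<sigma> ** \<sigma>) = (\<Sum>a\<in>UNIV. \<Sum>b\<in>UNIV. \<sigma> $ a $ b * cnj (\<sigma> $ a $ b))"
    unfolding mtrace_def matrix_matrix_mult_def
    by (simp, subst hermitian_entry[OF h, of _ "(_::'a)"], simp) 
  also have "\<dots> = of_real (\<Sum>a\<in>UNIV. \<Sum>b\<in>UNIV. (cmod (\<sigma> $ a $ b))^2)"
    by (simp add: zcnj)
  finally show ?thesis by simp
qed

lemma cinner_self_re: "Re (cinner v v) = (\<Sum>a\<in>UNIV. (cmod (v $ a))^2)"
proof -
  have "cinner v v = of_real (\<Sum>a\<in>UNIV. (cmod (v $ a))^2)"
    unfolding cinner_def by (simp add: zcnj mult.commute)
  then show ?thesis by simp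
qed


lemma aval_le:
  assumes h: "hermitian \<sigma>" and n: "(\<Sum>a\<in>UNIV. (cmod (v $ a))^2) = 1"
  shows "(aval v \<sigma>)^2 \<le> Re (mtrace (\<sigma> ** \<sigma>))"
proof -
  let ?S = "\<Sum>a\<in>UNIV. \<Sum>b\<in>UNIV. v $ a * cnj (v $ b) * \<sigma> $ a $ b"
  let ?f = "\<lambda>p::'a\<times>'a. cmod (v $ fst p) * cmod (v $ snd p)"
  let ?g = "\<lambda>p::'a\<times>'a. cmod (\<sigma> $ fst p $ snd p)"
  have "\<bar>aval v \<sigma>\<bar> \<le> cmod ?S" unfolding aval_def by (rule abs_Re_le_cmod)
  also have "\<dots> \<le> (\<Sum>a\<in>UNIV. cmod (\<Sum>b\<in>UNIV. v $ a * cnj (v $ b) * \<sigma> $ a $ b))" by (rule norm_sum)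
  also have "\<dots> \<le> (\<Sum>a\<in>UNIV. \<Sum>b\<in>UNIV. cmod (v $ a * cnj (v $ b) * \<sigma> $ a $ b))"
    by (intro sum_mono norm_sum)
  also have "\<dots> = (\<Sum>p\<in>UNIV. ?f p * ?g p)"
    by (subst sum_UNIV_prod) (simp only: fst_conv snd_conv norm_mult complex_mod_cnj)
  finally have 1: "\<bar>aval v \<sigma>\<bar> \<le> (\<Sum>p\<in>UNIV. ?f p * ?g p)" .
  have "(aval v \<sigma>)^2 \<le> (\<Sum>p\<in>UNIV. ?f p * ?g p)^2"
  proof -
    have "(aval v \<sigma>)^2 = \<bar>aval v \<sigma>\<bar>^2" by simp
    also have "\<dots> \<le> (\<Sum>p\<in>UNIV. ?f p * ?g p)^2" by (rule power_mono[OF 1 abs_ge_zero])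
    finally show ?thesis .
  qed
  also have "\<dots> \<le> (\<Sum>p\<in>UNIV. (?f p)^2) * (\<Sum>p\<in>UNIV. (?g p)^2)"
    by (rule Cauchy_Schwarz_ineq_sum)
  also have "(\<Sum>p\<in>UNIV. (?f p)^2) = 1"
  proof -
    have "(\<Sum>p\<in>UNIV. (?f p)^2) = (\<Sum>a\<in>UNIV. \<Sum>b\<in>UNIV. (cmod (v $ a))^2 * (cmod (v $ b))^2)"
      by (subst sum_UNIV_prod) (simp only: fst_conv snd_conv power_mult_distrib)
    also have "\<dots> = (\<Sum>a\<in>UNIV. (cmod (v $ a))^2) * (\<Sum>b\<in>UNIV. (cmod (v $ b))^2)"
      by (rule sum_product[symmetric])
    finally show ?thesis using n by simp
  qed
  also have "(\<Sum>p\<in>UNIV. (?g p)^2) = Re (mtrace (\<sigma> ** \<sigma>))"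
    by (subst sum_UNIV_prod) (simp only: fst_conv snd_conv tr_sq[OF h])
  finally show ?thesis by simp
qed


lemma term_bound:
  fixes m :: real assumes "m > 0" "a^2 \<le> s"
  shows "p^2 * s - 2 / m * (p * a) \<ge> - 1 / m^2"
proof -
  have 1: "p^2 * s \<ge> (p*a)^2" using assms(2) by (simp add: power_mult_distrib mult_left_mono)
  have 2: "(p*a - 1/m)^2 \<ge> 0" by simp
  have 3: "(p*a - 1/m)^2 = (p*a)^2 - 2 / m * (p * a) + 1/m^2"
    by (simp add: power2_diff power_divide)
  show ?thesis using 1 2 3 by linarith
qed


lemma dist_lower:
  assumes u: "orthonormal_basis_fam u" and h: "\<And>r. hermitian (\<sigma> r)"
  shows "Re (mtrace (((max_ent_state :: complex^('a::finite\<times>'a)^('a\<times>'a)) - chi_of p u \<sigma>) ** (max_ent_state - chi_of p u \<sigma>)))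
     \<ge> (real CARD('a) - 1) / real CARD('a)"
proof -
  define m where "m = real CARD('a)"
  have m: "m > 0" unfolding m_def by simp
  have nr: "(\<Sum>a\<in>UNIV. (cmod (u r $ a))^2) = 1" for r
    using u cinner_self_re[of "u r"] unfolding orthonormal_basis_fam_def by (metis one_complex.simps(1))
  have "(\<Sum>r\<in>(UNIV::'a set). - 1 / m^2) \<le> (\<Sum>r\<in>UNIV. (p r)^2 * Re (mtrace (\<sigma> r ** \<sigma> r)) - 2 / m * (p r * aval (u r) (\<sigma> r)))"
    by (intro sum_mono term_bound m aval_le h nr)
  also have "\<dots> = (\<Sum>r\<in>UNIV. (p r)^2 * Re (mtrace (\<sigma> r ** \<sigma> r))) - 2 / m * (\<Sum>r\<in>UNIV. p r * aval (u r) (\<sigma> r))"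
    by (simp add: sum_subtractf sum_distrib_left)
  finally have "- 1 / m \<le> (\<Sum>r\<in>UNIV. (p r)^2 * Re (mtrace (\<sigma> r ** \<sigma> r))) - 2 / m * (\<Sum>r\<in>UNIV. p r * aval (u r) (\<sigma> r))"
    using m by (simp add: m_def power2_eq_square)
  moreover have "(m - 1) / m = 1 - 1/m" using m by (simp add: field_simps)
  ultimately show ?thesis unfolding dist_formula[OF u] m_def[symmetric] by linarith
qed


lemma cnj_if: "cnj (if P then 1 else 0) = (if P then 1 else 0)" by simp
lemma mult_if1: "(if P then 1 else 0) * (z::complex) = (if P then z else 0)" by simp
lemma mult_if2: "(z::complex) * (if P then 1 else 0) = (if P then z else 0)" by simp
lemmas ifsimps = cnj_if mult_if1 mult_if2

lemma cinner_axis: "cinner (axis k (1::complex)) (axis l 1) = (if k = l then 1 else 0)"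
  unfolding cinner_def axis_def by (simp add: ifsimps)

lemma outer_axis_state: "is_state (outer (axis k (1::complex)) (axis k 1))"
proof -
  have h: "hermitian (outer (axis k (1::complex)) (axis k 1))"
    unfolding hermitian_def adjoint_def outer_def axis_def by (simp add: vec_eq_iff)
  have c: "cinner v (outer (axis k 1) (axis k 1) *v v) = v $ k * cnj (v $ k)" for v :: "complex^'a"
  proof -
    have "outer (axis k 1) (axis k 1) *v v = (\<chi> i. if i = k then v $ k else 0)"
      unfolding outer_def axis_def matrix_vector_mult_def by (simp add: vec_eq_iff ifsimps)
    then show ?thesis unfolding cinner_def by (simp add: mult.commute if_distrib[of "\<lambda>x. _ * x"] cong: if_cong)
  qed
  have t: "mtrace (outer (axis k (1::complex)) (axis k 1)) = 1"
    unfolding mtrace_def outer_def axis_def by (simp add: ifsimps)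
  show ?thesis unfolding is_state_def psd_def using h t
    by (simp add: c zcnj del: of_real_power)
qed

lemma DG_value: "D_G (max_ent_state :: complex^('a::finite \<times> 'a)^('a \<times> 'a)) = (real CARD('a) - 1) / real CARD('a)"
proof -
  let ?R = "max_ent_state :: complex^('a::finite \<times> 'a)^('a \<times> 'a)"
  define m where "m = real CARD('a)"
  have m: "m > 0" unfolding m_def by simp
  let ?u = "\<lambda>k::'a. axis k (1::complex)"
  let ?p = "\<lambda>k::'a. 1 / m"
  let ?s = "\<lambda>k::'a. outer (axis k (1::complex)) (axis k 1)"
  have ou: "orthonormal_basis_fam ?u" unfolding orthonormal_basis_fam_def by (simp add: cinner_axis)
  have zd: "zero_discord (chi_of ?p ?u ?s)"
    unfolding zero_discord_def chi_of_def
    by (rule exI[of _ ?u], rule exI[of _ ?p], rule exI[of _ ?s])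
       (use ou m in \<open>simp add: outer_axis_state m_def\<close>)
  have av: "aval (?u r) (?s r) = 1" for r
  proof -
    have "(\<Sum>a\<in>UNIV. \<Sum>b\<in>UNIV. ?u r $ a * cnj (?u r $ b) * ?s r $ a $ b) = 1"
      unfolding outer_def axis_def by (simp add: ifsimps if_distrib[of "\<lambda>x. _ * x"] cong: if_cong)
    then show ?thesis unfolding aval_def by simp
  qed
  have tt: "Re (mtrace (?s r ** ?s r)) = 1" for r
    by (simp add: mtrace_outer_mul cinner_axis)
  have val: "Re (mtrace ((?R - chi_of ?p ?u ?s) ** (?R - chi_of ?p ?u ?s))) = (m - 1) / m"
    unfolding dist_formula[OF ou] av tt using m by (simp add: m_def[symmetric] field_simps power2_eq_square)
  show ?thesis unfolding D_G_def m_def[symmetric]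
  proof (rule cInf_eq_minimum)
    show "(m - 1) / m \<in> {Re (mtrace ((?R - \<chi>') ** (?R - \<chi>'))) | \<chi>'. zero_discord \<chi>'}"
      unfolding mem_Collect_eq by (rule exI[of _ "chi_of ?p ?u ?s"]) (use zd val in simp)
  next
    fix x assume "x \<in> {Re (mtrace ((?R - \<chi>') ** (?R - \<chi>'))) | \<chi>'. zero_discord \<chi>'}"
    then obtain \<chi>' where x: "x = Re (mtrace ((?R - \<chi>') ** (?R - \<chi>')))" and "zero_discord \<chi>'" by blast
    then obtain u p \<sigma> where u: "orthonormal_basis_fam u" and st: "\<And>k. is_state (\<sigma> k)"
      and c: "\<chi>' = chi_of p u \<sigma>"
      unfolding zero_discord_def chi_of_def by blast
    have "\<And>k. hermitian (\<sigma> k)" using st by (simp add: is_state_def psd_def)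
    then show "(m - 1) / m \<le> x" unfolding x c m_def using dist_lower[OF u] by blast
  qed
qed


lemma matT_inner: "transpose P = P \<Longrightarrow> (P *v z) \<bullet> y = z \<bullet> (P *v (y::real^'n))"
  by (metis dot_lmul_matrix vector_transpose_matrix)

lemma trace_rank:
  fixes P :: "real^'n^'n"
  assumes "orth_proj P"
  shows "(\<Sum>i\<in>UNIV. P $ i $ i) = real (rank P)"
proof -
  have T: "transpose P = P" and I: "P ** P = P" using assms unfolding orth_proj_def by auto
  let ?V = "range (\<lambda>x. P *v x)"
  have sV: "subspace ?V"
    unfolding subspace_def
    by (metis (no_types, lifting) matrix_vector_mult_0_right matrix_vector_right_distrib
        matrix_vector_mult_scaleR rangeE rangeI)
  obtain B where BV: "B \<subseteq> ?V" and po: "pairwise orthogonal B" and n1: "\<And>x. x \<in> B \<Longrightarrow> norm x = 1"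
    and ind: "independent B" and cB: "card B = dim ?V" and sp: "span B = ?V"
    using orthonormal_basis_subspace[OF sV] by blast
  have fB: "finite B" using ind by (rule independent_imp_finite)
  have bb: "b \<bullet> c = (if b = c then 1 else 0)" if "b \<in> B" "c \<in> B" for b c
    using po n1 that by (auto simp: pairwise_def orthogonal_def norm_eq_1)
  have key: "P *v x = (\<Sum>b\<in>B. (b \<bullet> x) *\<^sub>R b)" for x
  proof -
    let ?w = "P *v x"
    have bx: "b \<bullet> ?w = b \<bullet> x" if bB: "b \<in> B" for b
    proof -
      obtain z where z: "b = P *v z" using BV bB by blast
      have "b \<bullet> ?w = z \<bullet> (P *v (P *v x))" unfolding z by (rule matT_inner[OF T])
      also have "\<dots> = z \<bullet> ?w" by (simp add: matrix_vector_mul_assoc I)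
      also have "\<dots> = b \<bullet> x" unfolding z by (rule matT_inner[OF T, symmetric])
      finally show ?thesis .
    qed
    let ?y = "?w - (\<Sum>b\<in>B. (b \<bullet> ?w) *\<^sub>R b)"
    have yB: "c \<bullet> ?y = 0" if "c \<in> B" for c
    proof -
      have "c \<bullet> (\<Sum>b\<in>B. (b \<bullet> ?w) *\<^sub>R b) = (\<Sum>b\<in>B. (b \<bullet> ?w) * (c \<bullet> b))"
        by (simp add: inner_sum_right)
      also have "\<dots> = (\<Sum>b\<in>B. if c = b then b \<bullet> ?w else 0)"
        by (intro sum.cong refl) (simp add: bb[OF that])
      also have "\<dots> = c \<bullet> ?w" using fB that by simp
      finally show ?thesis by (simp add: inner_diff_right)
    qed
    have wsp: "?w \<in> span B" using sp by simp
    have ysp: "?y \<in> span B"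
      by (intro span_diff wsp span_sum span_scale span_base)
    have "orthogonal ?y ?y"
      by (rule orthogonal_to_span[OF ysp]) (use yB in \<open>auto simp: orthogonal_def inner_commute\<close>)
    then have "?y = 0" by (simp add: orthogonal_def)
    then show ?thesis using bx by simp
  qed
  have "P $ i $ i = (\<Sum>b\<in>B. (b $ i)^2)" for i
  proof -
    have "P $ i $ i = (P *v axis i 1) $ i"
      by (simp add: matrix_vector_mult_def axis_def if_distrib[of "\<lambda>x. _ * x"] cong: if_cong)
    also have "\<dots> = (\<Sum>b\<in>B. (b $ i)^2)"
      unfolding key by (simp add: inner_axis power2_eq_square)
    finally show ?thesis .
  qed
  then have "(\<Sum>i\<in>UNIV. P $ i $ i) = (\<Sum>b\<in>B. \<Sum>i\<in>UNIV. (b $ i)^2)"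
    by (simp add: sum.swap[of _ B])
  also have "\<dots> = (\<Sum>b\<in>B. b \<bullet> b)"
    by (simp add: inner_vec_def power2_eq_square)
  also have "\<dots> = (\<Sum>b\<in>B. 1)" by (intro sum.cong refl) (simp add: bb)
  also have "\<dots> = real (rank P)" using cB by (simp add: rank_dim_range)
  finally show ?thesis .
qed


definition ip :: "complex^'a^'a \<Rightarrow> complex^'a^'a \<Rightarrow> complex" where
  "ip x y = (\<Sum>a\<in>UNIV. \<Sum>b\<in>UNIV. cnj (x $ a $ b) * y $ a $ b)"

definition imul :: "complex^'a^'a \<Rightarrow> complex^'a^'a" where
  "imul x = (\<chi> a b. \<i> * x $ a $ b)"

lemma inner_ip: "x \<bullet> y = Re (ip x y)"
  unfolding ip_def inner_vec_def inner_complex_def by (simp add: Re_sum)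

lemma ip_imul_right: "ip x (imul y) = \<i> * ip x y"
  unfolding ip_def imul_def by (simp add: sum_distrib_left mult_ac)
lemma ip_imul_left: "ip (imul x) y = - \<i> * ip x y"
  unfolding ip_def imul_def by (simp add: sum_distrib_left mult_ac sum_negf)

lemma herm_entry: "hermitian A \<Longrightarrow> A $ i $ j = cnj (A $ j $ i)"
  unfolding hermitian_def adjoint_def by (metis vec_lambda_beta)

lemma herm_cnj: "hermitian A \<Longrightarrow> cnj (A $ i $ j) = A $ j $ i"
  by (simp add: herm_entry[of A j i])

lemma ip_herm: "hermitian x \<Longrightarrow> ip x y = mtrace (x ** y)"
  unfolding ip_def mtrace_def matrix_matrix_mult_def
  by (simp add: herm_cnj, subst sum.swap, simp)

lemma ip_cnj: "hermitian x \<Longrightarrow> hermitian y \<Longrightarrow> cnj (ip x y) = ip x y"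
proof -
  assume hx: "hermitian x" and hy: "hermitian y"
  have "cnj (ip x y) = (\<Sum>a\<in>UNIV. \<Sum>b\<in>UNIV. x $ a $ b * cnj (y $ a $ b))"
    unfolding ip_def by simp
  also have "\<dots> = (\<Sum>a\<in>UNIV. \<Sum>b\<in>UNIV. cnj (x $ b $ a) * y $ b $ a)"
    by (simp add: herm_cnj[OF hx] herm_cnj[OF hy])
  also have "\<dots> = ip x y" unfolding ip_def by (subst sum.swap) simp
  finally show ?thesis .
qed

lemma ip_mat1_right: "ip x (mat 1) = cnj (mtrace x)"
  unfolding ip_def mtrace_def mat_def by (simp add: if_distrib[of "\<lambda>z. _ * z"] cong: if_cong)
lemma cnj_if01: "cnj (if P then 1 else 0) = (if P then 1 else 0)" by simp
lemma ip_mat1_left: "ip (mat 1) x = mtrace x"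
  unfolding ip_def mtrace_def mat_def by (simp add: if_distrib[of "\<lambda>z. z * _"] cnj_if01 cong: if_cong)
lemma ip_mat1_mat1: "ip (mat 1 :: complex^'a^'a) (mat 1) = of_nat CARD('a)"
  by (simp add: ip_mat1_left) (simp add: mtrace_def mat_def)
lemma ip_swap: "ip y x = cnj (ip x y)"
  unfolding ip_def by (simp add: mult.commute)


lemma Im_of_cnj_eq: "cnj z = z \<Longrightarrow> Im z = 0"
  by (metis complex_cnj_cancel_iff complex_cnj_zero_iff complex_eq_iff minus_complex.simps(2)
      add.inverse_neutral cnj.simps(2) equation_minus_iff neg_equal_zero)

lemma mtrace_imul: "mtrace (imul x) = \<i> * mtrace x"
  unfolding mtrace_def imul_def by (simp add: sum_distrib_left)
lemma mtrace_mat1: "mtrace (mat 1 :: complex^'a^'a) = of_nat CARD('a)"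
  unfolding mtrace_def mat_def by simp

definition fam :: "('g \<Rightarrow> complex^'a^'a) \<Rightarrow> ('g + 'g) + bool \<Rightarrow> complex^'a^'a" where
  "fam \<mu> k = (case k of Inl (Inl j) \<Rightarrow> \<mu> j | Inl (Inr j) \<Rightarrow> imul (\<mu> j)
      | Inr b \<Rightarrow> if b then mat 1 else imul (mat 1))"

lemma fam_inner:
  assumes su: "su_generators (\<mu> :: 'g::finite \<Rightarrow> complex^'a::finite^'a)"
  shows "fam \<mu> k \<bullet> fam \<mu> l = (if k = l then (case k of Inl _ \<Rightarrow> 2 | Inr _ \<Rightarrow> real CARD('a)) else 0)"
proof -
  have h: "\<And>j. hermitian (\<mu> j)" and t: "\<And>j. mtrace (\<mu> j) = 0"
    and tt: "\<And>i j. mtrace (\<mu> i ** \<mu> j) = (if i = j then 2 else 0)"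
    using su unfolding su_generators_def by auto
  show ?thesis
    by (cases k; cases l)
       (auto simp: fam_def inner_ip ip_imul_left ip_imul_right ip_herm[OF h] tt ip_mat1_right ip_mat1_left
         ip_mat1_mat1 t mtrace_imul mtrace_mat1 split: sum.split)
qed


lemma fam_span:
  assumes su: "su_generators (\<mu> :: 'g::finite \<Rightarrow> complex^'a::finite^'a)"
  shows "span (range (fam \<mu>)) = UNIV"
proof -
  let ?f = "fam \<mu>"
  have pos: "?f k \<bullet> ?f k > 0" for k
    using fam_inner[OF su, of k k] by (auto split: sum.split)
  have inj: "inj ?f"
  proof (rule injI)
    fix k l assume e: "?f k = ?f l"
    show "k = l"
    proof (rule ccontr)
      assume "k \<noteq> l"
      then have "?f k \<bullet> ?f l = 0" using fam_inner[OF su, of k l] by simp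
      then show False using pos[of k] e by simp
    qed
  qed
  have po: "pairwise orthogonal (range ?f)"
    unfolding pairwise_def orthogonal_def using fam_inner[OF su] by auto
  have nz: "0 \<notin> range ?f" using pos by (metis inner_zero_left less_irrefl rangeE)
  have ind: "independent (range ?f)" by (rule pairwise_orthogonal_independent[OF po nz])
  have cg: "CARD('g) = CARD('a)^2 - 1" using su unfolding su_generators_def by simp
  have "card (range ?f) = CARD(('g + 'g) + bool)" using inj by (simp add: card_image)
  also have "\<dots> = 2 * CARD('g) + 2"
    using card_Plus[of "UNIV::('g+'g) set" "UNIV::bool set"] card_Plus[of "UNIV::'g set" "UNIV::'g set"]
    by simp
  finally have c: "card (range ?f) = 2 * CARD('g) + 2" .
  have "CARD('a) \<ge> 1" by (simp add: Suc_leI)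
  then have "CARD('a)^2 \<ge> 1" by simp
  then have "dim (UNIV :: (complex^'a^'a) set) \<le> card (range ?f)"
    unfolding Euclidean_Space.dim_UNIV c cg by (simp add: power2_eq_square algebra_simps)
  then have "UNIV \<subseteq> span (range ?f)"
    by (intro card_ge_dim_independent ind) auto
  then show ?thesis by auto
qed

lemma complete:
  assumes su: "su_generators (\<mu> :: 'g::finite \<Rightarrow> complex^'a::finite^'a)"
    and hx: "hermitian x" and tx: "mtrace x = 0"
  shows "x = (\<Sum>j\<in>UNIV. (x \<bullet> \<mu> j / 2) *\<^sub>R \<mu> j)"
proof -
  have h: "\<And>j. hermitian (\<mu> j)" and t: "\<And>j. mtrace (\<mu> j) = 0"
    and tt: "\<And>i j. mtrace (\<mu> i ** \<mu> j) = (if i = j then 2 else 0)"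
    using su unfolding su_generators_def by auto
  let ?y = "x - (\<Sum>j\<in>UNIV. (x \<bullet> \<mu> j / 2) *\<^sub>R \<mu> j)"
  have mm: "\<mu> i \<bullet> \<mu> j = (if i = j then 2 else 0)" for i j
    by (simp add: inner_ip ip_herm[OF h] tt)
  have im: "imul (\<mu> i) \<bullet> \<mu> j = 0" for i j
    by (simp add: inner_ip ip_imul_left ip_herm[OF h] tt)
  have m1: "mat 1 \<bullet> \<mu> j = 0" for j
    by (simp add: inner_ip ip_mat1_left t)
  have im1: "imul (mat 1) \<bullet> \<mu> j = 0" for j
    by (simp add: inner_ip ip_imul_left ip_mat1_left t)
  have "fam \<mu> k \<bullet> ?y = 0" for k
  proof -
    have "fam \<mu> k \<bullet> ?y = fam \<mu> k \<bullet> x - (\<Sum>j\<in>UNIV. (x \<bullet> \<mu> j / 2) * (fam \<mu> k \<bullet> \<mu> j))"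
      by (simp add: inner_diff_right inner_sum_right)
    also have "\<dots> = 0"
    proof (cases k)
      case (Inl a)
      then show ?thesis
      proof (cases a)
        case (Inl i)
        then show ?thesis using \<open>k = Inl a\<close> by (simp add: fam_def mm inner_commute if_distrib[of "\<lambda>z. _ * z"] if_distrib[of "\<lambda>z. z / _"] cong: if_cong)
      next
        case (Inr i)
        have "Im (ip (\<mu> i) x) = 0" by (rule Im_of_cnj_eq, rule ip_cnj[OF h hx])
        then show ?thesis using Inr \<open>k = Inl a\<close> by (simp add: fam_def im) (simp add: inner_ip ip_imul_left)
      qed
    next
      case (Inr b)
      then show ?thesis
        by (cases b) (simp_all add: fam_def m1 im1 inner_ip ip_imul_left ip_mat1_left tx t)
    qed
    finally show ?thesis .
  qed
  then have "orthogonal ?y ?y"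
    by (intro orthogonal_to_span[of ?y "range (fam \<mu>)"]) (auto simp: fam_span[OF su] orthogonal_def inner_commute)
  then show ?thesis by (simp add: orthogonal_def)
qed


lemma mdiff_rdistrib: "((B - C) ** (A::real^'n^'k)) = (B ** A) - (C ** A)"
  by (simp add: matrix_matrix_mult_def vec_eq_iff ring_distribs sum_subtractf)
lemma mdiff_ldistrib: "((A::real^'n^'k) ** (B - C)) = (A ** B) - (A ** C)"
  by (simp add: matrix_matrix_mult_def vec_eq_iff ring_distribs sum_subtractf)

lemma frob:
  fixes P :: "real^'g^'g" and Om :: "'g \<Rightarrow> 'h::finite \<Rightarrow> real"
  assumes op: "orth_proj P" and oo: "\<And>k l. (\<Sum>j\<in>UNIV. Om k j * Om l j) = (if k = l then 1 else 0)"
  shows "(\<Sum>i\<in>UNIV. \<Sum>j\<in>UNIV. (\<Sum>k\<in>UNIV. (mat 1 - P) $ i $ k * Om k j)^2) = real CARD('g) - (\<Sum>i\<in>UNIV. P $ i $ i)"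
proof -
  have T: "transpose P = P" and I: "P ** P = P" using op unfolding orth_proj_def by auto
  define Q where "Q = mat 1 - P"
  have Qs: "Q $ k $ i = Q $ i $ k" for i k
  proof -
    have "P $ k $ i = P $ i $ k" using T unfolding transpose_def by (metis vec_lambda_beta)
    then show ?thesis unfolding Q_def by (simp add: mat_def)
  qed
  have QQ: "Q ** Q = Q"
    unfolding Q_def by (simp add: mdiff_rdistrib mdiff_ldistrib I)
  have row: "(\<Sum>j\<in>UNIV. (\<Sum>k\<in>UNIV. Q $ i $ k * Om k j)^2) = (\<Sum>k\<in>UNIV. Q $ i $ k * Q $ i $ k)" for i
  proof -
    have "(\<Sum>j\<in>UNIV. (\<Sum>k\<in>UNIV. Q $ i $ k * Om k j)^2)
        = (\<Sum>j\<in>UNIV. \<Sum>k\<in>UNIV. \<Sum>l\<in>UNIV. Q $ i $ k * Q $ i $ l * (Om k j * Om l j))"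
      by (simp add: power2_eq_square sum_product mult_ac)
    also have "\<dots> = (\<Sum>k\<in>UNIV. \<Sum>l\<in>UNIV. Q $ i $ k * Q $ i $ l * (\<Sum>j\<in>UNIV. Om k j * Om l j))"
      by (subst sum.swap, rule sum.cong[OF refl], subst sum.swap, simp add: sum_distrib_left)
    also have "\<dots> = (\<Sum>k\<in>UNIV. Q $ i $ k * Q $ i $ k)"
      by (simp add: oo if_distrib[of "\<lambda>z. _ * z"] cong: if_cong)
    finally show ?thesis .
  qed
  have "(\<Sum>i\<in>UNIV. \<Sum>j\<in>UNIV. (\<Sum>k\<in>UNIV. Q $ i $ k * Om k j)^2) = (\<Sum>i\<in>UNIV. (Q ** Q) $ i $ i)"
    unfolding row by (simp add: matrix_matrix_mult_def Qs[of i _ for i])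
  also have "\<dots> = (\<Sum>i\<in>UNIV. 1 - P $ i $ i)" unfolding QQ by (simp add: Q_def mat_def)
  also have "\<dots> = real CARD('g) - (\<Sum>i\<in>UNIV. P $ i $ i)" by (simp add: sum_subtractf)
  finally show ?thesis unfolding Q_def .
qed


definition cconj :: "complex^'a^'a \<Rightarrow> complex^'a^'a" where
  "cconj A = (\<chi> a b. cnj (A $ a $ b))"

lemma xvec_zero:
  assumes "su_generators (la :: 'ga::finite \<Rightarrow> complex^'a::finite^'a)"
  shows "xvec la (max_ent_state :: complex^('a \<times> 'a)^('a \<times> 'a)) i = 0"
proof -
  have t: "mtrace (la i) = 0" using assms unfolding su_generators_def by auto
  have "mtrace (kron (la i) (mat 1 :: complex^'a^'a) ** (max_ent_state :: complex^('a \<times> 'a)^('a \<times> 'a))) = 0"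
    unfolding mtrace_mul_rho using t by (simp add: kron_def mat_def mtrace_def if_distrib[of "\<lambda>z. _ * z"] cong: if_cong)
  then show ?thesis unfolding xvec_def by simp
qed

lemma tcoef_val:
  "tcoef la lb (max_ent_state :: complex^('a::finite \<times> 'a)^('a \<times> 'a)) i j = real CARD('a) / 4 * (cconj (la i) \<bullet> lb j)"
proof -
  have "mtrace (kron (la i) (lb j) ** (max_ent_state :: complex^('a \<times> 'a)^('a \<times> 'a)))
      = ip (cconj (la i)) (lb j) / of_nat CARD('a)"
    unfolding mtrace_mul_rho by (simp add: kron_def ip_def cconj_def)
  then show ?thesis unfolding tcoef_def inner_ip
    by (simp add: Re_divide_of_nat)
qed

lemma sqrt_fact: "m > 0 \<Longrightarrow> sqrt (2 / (m^2 * m)) * sqrt (2 / m) = 2 / m^2" for m :: real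
proof -
  assume m: "m > 0"
  have "sqrt (2 / (m^2 * m)) * sqrt (2 / m) = sqrt ((2 / m^2)^2)"
    by (simp add: real_sqrt_mult[symmetric] power2_eq_square field_simps)
  also have "\<dots> = 2 / m^2" using m by simp
  finally show ?thesis .
qed

lemma calT_entries:
  assumes "su_generators (la :: 'ga::finite \<Rightarrow> complex^'a::finite^'a)"
  shows "calT la lb (max_ent_state :: complex^('a \<times> 'a)^('a \<times> 'a)) $ k $ Inl u = 0"
    and "calT la lb (max_ent_state :: complex^('a \<times> 'a)^('a \<times> 'a)) $ k $ Inr j
         = ((cconj (la k) \<bullet> lb j) / 2) / real CARD('a)"
proof -
  show "calT la lb (max_ent_state :: complex^('a \<times> 'a)^('a \<times> 'a)) $ k $ Inl u = 0"
    unfolding calT_def by (simp add: xvec_zero[OF assms])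
  have m: "real CARD('a) > 0" by simp
  show "calT la lb (max_ent_state :: complex^('a \<times> 'a)^('a \<times> 'a)) $ k $ Inr j
         = ((cconj (la k) \<bullet> lb j) / 2) / real CARD('a)"
    unfolding calT_def using sqrt_fact[OF m]
    by (simp add: tcoef_val mult.assoc[symmetric]) (simp add: power2_eq_square field_simps)
qed

lemma cconj_herm: "hermitian A \<Longrightarrow> hermitian (cconj A)"
  unfolding hermitian_def adjoint_def cconj_def by (simp add: vec_eq_iff)

lemma cconj_tr: "mtrace (cconj A) = cnj (mtrace A)"
  unfolding mtrace_def cconj_def by simp

lemma ip_cconj: "ip (cconj A) (cconj B) = cnj (ip A B)"
  unfolding ip_def cconj_def by simp

lemma rows_orth:
  assumes sa: "su_generators (la :: 'ga::finite \<Rightarrow> complex^'a::finite^'a)"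
    and sb: "su_generators (lb :: 'gb::finite \<Rightarrow> complex^'a^'a)"
  shows "(\<Sum>j\<in>UNIV. ((cconj (la i) \<bullet> lb j) / 2) * ((cconj (la k) \<bullet> lb j) / 2)) = (if i = k then 1 else 0)"
proof -
  have h: "\<And>j. hermitian (la j)" and t: "\<And>j. mtrace (la j) = 0"
    and tt: "\<And>i j. mtrace (la i ** la j) = (if i = j then 2 else 0)"
    using sa unfolding su_generators_def by auto
  let ?x = "cconj (la i)" and ?y = "cconj (la k)"
  have ex: "?x = (\<Sum>j\<in>UNIV. (?x \<bullet> lb j / 2) *\<^sub>R lb j)"
    by (rule complete[OF sb cconj_herm[OF h]]) (simp add: cconj_tr t)
  have "?x \<bullet> ?y = (\<Sum>j\<in>UNIV. (?x \<bullet> lb j / 2) * (lb j \<bullet> ?y))"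
    by (subst ex) (simp add: inner_sum_left)
  moreover have "?x \<bullet> ?y = (if i = k then 2 else 0)"
    by (simp add: inner_ip ip_cconj ip_herm[OF h] tt)
  ultimately show ?thesis
    by (simp add: inner_commute sum_divide_distrib[symmetric] split: if_splits)
qed


lemma sum_UNIV_Plus: "(\<Sum>c\<in>(UNIV::('x::finite + 'y::finite) set). f c) = (\<Sum>u\<in>UNIV. f (Inl u)) + (\<Sum>j\<in>UNIV. f (Inr j))"
  using sum.Plus[of "UNIV::'x set" "UNIV::'y set" f] by (simp add: comp_def)

lemma DP_value:
  assumes sa: "su_generators (la :: 'ga::finite \<Rightarrow> complex^'a::finite^'a)"
    and sb: "su_generators (lb :: 'gb::finite \<Rightarrow> complex^'a^'a)"
  shows "D_P la lb (max_ent_state :: complex^('a \<times> 'a)^('a \<times> 'a)) = (real CARD('a) - 1) / real CARD('a)"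
proof -
  let ?C = "calT la lb (max_ent_state :: complex^('a \<times> 'a)^('a \<times> 'a))"
  define m where "m = real CARD('a)"
  have m: "m > 0" unfolding m_def by simp
  define Om where "Om k j = (cconj (la k) \<bullet> lb j) / 2" for k j
  have cg: "CARD('ga) = CARD('a)^2 - 1" using sa unfolding su_generators_def by simp
  have c1: "CARD('a) \<ge> 1" by (simp add: Suc_leI)
  have cgr: "real CARD('ga) = m^2 - 1"
    using c1 unfolding cg m_def by (simp add: of_nat_diff)
  have oo: "\<And>k l. (\<Sum>j\<in>UNIV. Om k j * Om l j) = (if k = l then 1 else 0)"
    unfolding Om_def by (rule rows_orth[OF sa sb])
  have val: "(norm (?C - P ** ?C))^2 = (m - 1) / m" if op: "orth_proj P" and rk: "rank P = CARD('a) - 1" for P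
  proof -
    let ?Q = "mat 1 - P"
    have e: "?C - P ** ?C = ?Q ** ?C" by (simp add: mdiff_rdistrib)
    have "(norm (?C - P ** ?C))^2 = (\<Sum>i\<in>UNIV. \<Sum>c\<in>UNIV. ((?Q ** ?C) $ i $ c)^2)"
      unfolding power2_norm_eq_inner e by (simp add: inner_vec_def power2_eq_square)
    also have "\<dots> = (\<Sum>i\<in>UNIV. \<Sum>j\<in>UNIV. (\<Sum>k\<in>UNIV. ?Q $ i $ k * Om k j)^2 / m^2)"
      unfolding sum_UNIV_Plus
      by (simp add: matrix_matrix_mult_def calT_entries[OF sa] Om_def m_def[symmetric]
          sum_divide_distrib[symmetric] power_divide)
    also have "\<dots> = (\<Sum>i\<in>UNIV. \<Sum>j\<in>UNIV. (\<Sum>k\<in>UNIV. ?Q $ i $ k * Om k j)^2) / m^2"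
      by (simp add: sum_divide_distrib)
    also have "\<dots> = (real CARD('ga) - (\<Sum>i\<in>UNIV. P $ i $ i)) / m^2"
      using frob[OF op oo] by simp
    also have "\<dots> = (m^2 - 1 - (m - 1)) / m^2"
      unfolding trace_rank[OF op] rk cgr using c1 by (simp add: of_nat_diff m_def)
    also have "\<dots> = (m - 1) / m" using m by (simp add: power2_eq_square field_simps)
    finally show ?thesis .
  qed
  obtain S :: "'ga set" where S: "card S = CARD('a) - 1"
  proof -
    have "CARD('a) * 1 \<le> CARD('a) * CARD('a)" using c1 by (rule mult_left_mono) simp
    then have "CARD('a) - 1 \<le> CARD('ga)" unfolding cg power2_eq_square by (simp add: diff_le_mono)
    then obtain S :: "'ga set" where "S \<subseteq> UNIV" "card S = CARD('a) - 1"
      using obtain_subset_with_card_n by blast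
    then show ?thesis using that by blast
  qed
  define P0 :: "real^'ga^'ga" where "P0 = (\<chi> i j. if i = j \<and> i \<in> S then 1 else 0)"
  have s1: "(\<Sum>k\<in>UNIV. if k = i \<and> k \<in> S then 1 else 0::real) = 1" if "i \<in> S" for i
    by (subst sum.cong[OF refl, of _ _ "\<lambda>k. if k = i then 1 else 0"]) (use that in auto)
  have op0: "orth_proj P0"
    unfolding orth_proj_def P0_def transpose_def matrix_matrix_mult_def
    by (auto simp: vec_eq_iff if_distrib[of "\<lambda>z. _ * z"] s1 cong: if_cong)
  have "real (rank P0) = (\<Sum>i\<in>UNIV. P0 $ i $ i)" by (rule trace_rank[OF op0, symmetric])
  also have "\<dots> = real (card S)" unfolding P0_def by (simp add: sum.If_cases)
  finally have rk0: "rank P0 = CARD('a) - 1" using S by simp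
  have "{(norm (?C - P ** ?C))^2 | P. orth_proj P \<and> rank P = CARD('a) - 1} = {(m - 1) / m}"
  proof (intro equalityI subsetI)
    fix x assume "x \<in> {(norm (?C - P ** ?C))^2 | P. orth_proj P \<and> rank P = CARD('a) - 1}"
    then show "x \<in> {(m - 1) / m}" using val by auto
  next
    fix x assume "x \<in> {(m - 1) / m}"
    then show "x \<in> {(norm (?C - P ** ?C))^2 | P. orth_proj P \<and> rank P = CARD('a) - 1}"
      using val[OF op0 rk0] op0 rk0 by (intro CollectI exI[of _ P0]) auto
  qed
  then show ?thesis unfolding D_P_def m_def by simp
qed


theorem mainTheorem5:
  fixes la :: "'ga::finite \<Rightarrow> complex^'a^'a"
    and lb :: "'gb::finite \<Rightarrow> complex^'a^'a"
  assumes "su_generators la" and "su_generators lb"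
  shows "D_P la lb (max_ent_state :: complex^('a \<times> 'a)^('a \<times> 'a)) = (real CARD('a) - 1) / real CARD('a)
       \<and> D_G (max_ent_state :: complex^('a \<times> 'a)^('a \<times> 'a)) = (real CARD('a) - 1) / real CARD('a)"
  using DP_value[OF assms] DG_value by simp

end
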